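(* Let $\beta>0$ and $\varepsilon>0$, and let $q_0,q_1$ be the probability distributions on four outcomes given by $$q_0=\frac1{Z_0}\bigl(e^{2\beta},1,e^{-\beta},e^{-\beta}\bigr),\qquad q_1=\frac1{Z_1}\bigl(e^{2\beta},1,e^{-\beta+2\beta\varepsilon},e^{-\beta-2\beta\varepsilon}\bigr),$$ with $Z_0,Z_1$ the normalizing constants. Then $\mathrm{D}(q_1\|q_0)\le8\beta^2\varepsilon^2e^{-3\beta+2\beta\varepsilon}$. When $\varepsilon\le1/2$, $\mathrm{D}(q_1\|q_0)\le8\beta^2\varepsilon^2e^{-2\beta}$.
   Context: $\mathrm{D}(p\|q)=\sum_jp_j\log(p_j/q_j)$ is the Kullback–Leibler divergence (natural logarithm). These are the diagonal Gibbs distributions at inverse temperature $\beta$ of the two-qubit diagonal Hamiltonians $H_0=\mathrm{diag}(-2,0,1,1)$ and $H_1=\mathrm{diag}(-2,0,1+2\varepsilon,1-2\varepsilon)$. *)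

theory Defs
  imports Complex_Main
begin

definition KL :: "(nat \<Rightarrow> real) \<Rightarrow> (nat \<Rightarrow> real) \<Rightarrow> real" where
  "KL p q = (\<Sum>j<4. p j * ln (p j / q j))"

definition normalize4 :: "(nat \<Rightarrow> real) \<Rightarrow> nat \<Rightarrow> real" where
  "normalize4 w j = w j / (\<Sum>k<4. w k)"

definition w0 :: "real \<Rightarrow> nat \<Rightarrow> real" where
  "w0 \<beta> j = [exp (2*\<beta>), 1, exp (-\<beta>), exp (-\<beta>)] ! j"

definition w1 :: "real \<Rightarrow> real \<Rightarrow> nat \<Rightarrow> real" where
  "w1 \<beta> \<epsilon> j = [exp (2*\<beta>), 1, exp (-\<beta> + 2*\<beta>*\<epsilon>), exp (-\<beta> - 2*\<beta>*\<epsilon>)] ! j"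

definition q0 :: "real \<Rightarrow> nat \<Rightarrow> real" where
  "q0 \<beta> = normalize4 (w0 \<beta>)"

definition q1 :: "real \<Rightarrow> real \<Rightarrow> nat \<Rightarrow> real" where
  "q1 \<beta> \<epsilon> = normalize4 (w1 \<beta> \<epsilon>)"

end

theory Submission
  imports Defs
begin

lemma sum4: "(\<Sum>j<(4::nat). f j) = f 0 + f 1 + f 2 + (f 3 :: real)"
  by (simp add: numeral_eq_Suc)

theorem lemma5p1:
  fixes \<beta> \<epsilon> :: real
  assumes "\<beta> > 0" and "\<epsilon> > 0"
  shows "KL (q1 \<beta> \<epsilon>) (q0 \<beta>) \<le> 8 * \<beta>\<^sup>2 * \<epsilon>\<^sup>2 * exp (-3*\<beta> + 2*\<beta>*\<epsilon>)
       \<and> (\<epsilon> \<le> 1/2 \<longrightarrow> KL (q1 \<beta> \<epsilon>) (q0 \<beta>) \<le> 8 * \<beta>\<^sup>2 * \<epsilon>\<^sup>2 * exp (-2*\<beta>))"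
proof -
  define t where "t = 2*\<beta>*\<epsilon>"
  have t0: "t > 0" using assms by (simp add: t_def)
  define a where "a = exp (2*\<beta>)"
  define c where "c = exp (-\<beta>)"
  define u where "u = exp t"
  define v where "v = exp (-t)"
  have a0: "a > 0" and c0: "c > 0" and u0: "u > 0" and v0: "v > 0"
    by (auto simp: a_def c_def u_def v_def)
  have uv: "u * v = 1" by (simp add: u_def v_def flip: exp_add)
  have e2: "exp (-\<beta> + 2*\<beta>*\<epsilon>) = c * u" by (simp add: c_def u_def t_def flip: exp_add)
  have e3: "exp (-\<beta> - 2*\<beta>*\<epsilon>) = c * v" by (simp add: c_def v_def t_def flip: exp_add)
  define Z0 where "Z0 = a + 1 + c + c"
  define Z1 where "Z1 = a + 1 + c*u + c*v"
  have cu0: "c*u > 0" and cv0: "c*v > 0" using c0 u0 v0 by simp_all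
  have Z0p: "Z0 > 0" unfolding Z0_def using a0 c0 by linarith
  have Z1p: "Z1 > 0" unfolding Z1_def using a0 cu0 cv0 by linarith
  have uv2: "u + v \<ge> 2"
  proof -
    have "(u - v)^2 \<ge> 0" by simp
    hence "(u+v)^2 \<ge> 4" using uv by (simp add: power2_eq_square algebra_simps)
    hence "2^2 \<le> (u+v)^2" by simp
    thus ?thesis by (rule power2_le_imp_le) (use u0 v0 in linarith)
  qed
  have "c*2 \<le> c*(u+v)" using uv2 c0 by (intro mult_left_mono) auto
  moreover have "c*(u+v) = c*u + c*v" by (rule distrib_left)
  ultimately have Z01: "Z0 \<le> Z1" unfolding Z0_def Z1_def by linarith
  have lnle: "ln (Z0/Z1) \<le> 0" using Z0p Z1p Z01 by simp
  have w0v: "w0 \<beta> 0 = a" "w0 \<beta> 1 = 1" "w0 \<beta> 2 = c" "w0 \<beta> 3 = c"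
    by (simp_all add: w0_def a_def c_def)
  have w1v: "w1 \<beta> \<epsilon> 0 = a" "w1 \<beta> \<epsilon> 1 = 1" "w1 \<beta> \<epsilon> 2 = c*u" "w1 \<beta> \<epsilon> 3 = c*v"
    unfolding e2[symmetric] e3[symmetric] by (simp_all add: w1_def a_def)
  have Zsum0: "(\<Sum>k<4. w0 \<beta> k) = Z0" unfolding sum4 w0v Z0_def by simp
  have Zsum1: "(\<Sum>k<4. w1 \<beta> \<epsilon> k) = Z1" unfolding sum4 w1v Z1_def by simp
  have q0v: "\<And>j. q0 \<beta> j = w0 \<beta> j / Z0" by (simp add: q0_def normalize4_def Zsum0)
  have q1v: "\<And>j. q1 \<beta> \<epsilon> j = w1 \<beta> \<epsilon> j / Z1" by (simp add: q1_def normalize4_def Zsum1)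
  have lnu: "ln u = t" and lnv: "ln v = -t" by (simp_all add: u_def v_def)
  have r0: "ln (q1 \<beta> \<epsilon> 0 / q0 \<beta> 0) = ln (Z0/Z1)"
  proof -
    have "q1 \<beta> \<epsilon> 0 / q0 \<beta> 0 = Z0/Z1" unfolding q0v q1v w0v w1v
      using a0 Z0p Z1p by (simp add: field_simps)
    thus ?thesis by simp
  qed
  have r1: "ln (q1 \<beta> \<epsilon> 1 / q0 \<beta> 1) = ln (Z0/Z1)"
  proof -
    have "q1 \<beta> \<epsilon> 1 / q0 \<beta> 1 = Z0/Z1" unfolding q0v q1v w0v w1v
      using Z0p Z1p by (simp add: field_simps)
    thus ?thesis by simp
  qed
  have r2: "ln (q1 \<beta> \<epsilon> 2 / q0 \<beta> 2) = t + ln (Z0/Z1)"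
  proof -
    have "q1 \<beta> \<epsilon> 2 / q0 \<beta> 2 = u * (Z0/Z1)" unfolding q0v q1v w0v w1v
      using c0 Z0p Z1p by (simp add: field_simps)
    moreover have "ln (u*(Z0/Z1)) = ln u + ln (Z0/Z1)" using u0 Z0p Z1p by (intro ln_mult_pos) auto
    ultimately show ?thesis unfolding lnu by simp
  qed
  have r3: "ln (q1 \<beta> \<epsilon> 3 / q0 \<beta> 3) = -t + ln (Z0/Z1)"
  proof -
    have "q1 \<beta> \<epsilon> 3 / q0 \<beta> 3 = v * (Z0/Z1)" unfolding q0v q1v w0v w1v
      using c0 Z0p Z1p by (simp add: field_simps)
    moreover have "ln (v*(Z0/Z1)) = ln v + ln (Z0/Z1)" using v0 Z0p Z1p by (intro ln_mult_pos) auto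
    ultimately show ?thesis unfolding lnv by simp
  qed
  have qs: "q1 \<beta> \<epsilon> 0 = a/Z1" "q1 \<beta> \<epsilon> 1 = 1/Z1" "q1 \<beta> \<epsilon> 2 = c*u/Z1" "q1 \<beta> \<epsilon> 3 = c*v/Z1"
    unfolding q1v w1v by simp_all
  have KLeq: "KL (q1 \<beta> \<epsilon>) (q0 \<beta>) = ln (Z0/Z1) + c*(u - v)*t/Z1"
  proof -
    have "KL (q1 \<beta> \<epsilon>) (q0 \<beta>) = a/Z1 * ln (Z0/Z1) + 1/Z1 * ln (Z0/Z1)
        + c*u/Z1 * (t + ln (Z0/Z1)) + c*v/Z1 * (-t + ln (Z0/Z1))"
      unfolding KL_def sum4 r0 r1 r2 r3 unfolding qs by simp
    also have "\<dots> = (a + 1 + c*u + c*v)/Z1 * ln (Z0/Z1) + c*(u - v)*t/Z1"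
      using Z1p
      by (simp add: field_simps)
    also have "\<dots> = ln (Z0/Z1) + c*(u - v)*t/Z1" using Z1p by (simp add: Z1_def[symmetric])
    finally show ?thesis .
  qed
  have uvb: "u - v \<le> 2*t*u"
  proof -
    have "exp (-2*t) \<ge> 1 + (-2*t)" by (rule exp_ge_add_one_self)
    moreover have "v = u * exp (-2*t)" by (simp add: u_def v_def flip: exp_add)
    ultimately have "u * (1 + (-2*t)) \<le> v" using u0 by (simp add: mult_left_mono)
    hence "u - v \<le> u * (2*t)" by (simp add: algebra_simps)
    thus ?thesis by (simp add: algebra_simps)
  qed
  have Z1a: "Z1 \<ge> a" using c0 u0 v0 by (simp add: Z1_def)
  have ca: "c / a = exp (-3*\<beta>)" by (simp add: c_def a_def flip: exp_diff)
  have main: "c*(u - v)*t/Z1 \<le> 2*t^2*exp (-3*\<beta>)*u"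
  proof -
    have "c*(u - v)*t/Z1 \<le> c*(2*t*u)*t/Z1"
      using c0 t0 Z1p uvb by (simp add: divide_right_mono mult_right_mono mult_left_mono)
    also have "\<dots> \<le> c*(2*t*u)*t/a"
      using c0 t0 u0 a0 Z1a by (intro divide_left_mono) auto
    also have "\<dots> = 2*t^2*(c/a)*u" by (simp add: power2_eq_square)
    finally show ?thesis by (simp add: ca)
  qed
  have ex: "exp (-3*\<beta>)*u = exp (-3*\<beta> + 2*\<beta>*\<epsilon>)" unfolding u_def t_def exp_add[symmetric] by simp
  have part1: "KL (q1 \<beta> \<epsilon>) (q0 \<beta>) \<le> 8 * \<beta>\<^sup>2 * \<epsilon>\<^sup>2 * exp (-3*\<beta> + 2*\<beta>*\<epsilon>)"
  proof -
    have "KL (q1 \<beta> \<epsilon>) (q0 \<beta>) \<le> 2*t^2*exp (-3*\<beta>)*u" using KLeq lnle main by linarith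
    also have "\<dots> = 8 * \<beta>\<^sup>2 * \<epsilon>\<^sup>2 * exp (-3*\<beta> + 2*\<beta>*\<epsilon>)"
      unfolding ex[symmetric] t_def by (simp add: power2_eq_square)
    finally show ?thesis .
  qed
  show ?thesis
  proof (intro conjI impI part1)
    assume "\<epsilon> \<le> 1/2"
    hence "\<beta>*\<epsilon> \<le> \<beta>*(1/2)" using assms by (intro mult_left_mono) auto
    hence "-3*\<beta> + 2*\<beta>*\<epsilon> \<le> -2*\<beta>" by simp
    hence "exp (-3*\<beta> + 2*\<beta>*\<epsilon>) \<le> exp (-2*\<beta>)" by simp
    hence "8 * \<beta>\<^sup>2 * \<epsilon>\<^sup>2 * exp (-3*\<beta> + 2*\<beta>*\<epsilon>) \<le> 8 * \<beta>\<^sup>2 * \<epsilon>\<^sup>2 * exp (-2*\<beta>)"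
      by (simp add: mult_left_mono)
    thus "KL (q1 \<beta> \<epsilon>) (q0 \<beta>) \<le> 8 * \<beta>\<^sup>2 * \<epsilon>\<^sup>2 * exp (-2*\<beta>)" using part1 by linarith
  qed
qed

end
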